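(* Let $M=\mathbb{Z}^n$, let $N$ be its dual lattice, and let $\Delta\subset\mathbb{R}\otimes M$ be a reflexive simplicial lattice polytope containing $0$ in its interior, with dual polytope $\Delta^*\subset\mathbb{R}\otimes N$. Assume that for every $(n-1)$-dimensional face of $\partial\Delta^*$, its vertices form a $\mathbb{Z}$-basis of $N$. Let $V(\Delta^* )$ be the set of vertices of $\Delta^*$ and fix coordinates $x$ with $\mathbb{C}[N]=\mathbb{C}[x,x^{-1}]$. Then for every $\mathbf{a}=(a_v)\in(\mathbb{C}^* )^{V(\Delta^* )}$, the Laurent polynomial \[ f_{\mathbf a}(x)=\sum_{v\in V(\Delta^* )}a_vx^v\in\mathbb{C}[x,x^{-1}] \] is convenient and non-degenerate with respect to its Newton polyhedron in the sense of Kouchnirenko.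
   Context: A lattice polytope $\Delta$ with $0$ in its interior is reflexive if its dual $\Delta^*=\{u:\langle u,m\rangle\ge -1\ \forall m\in\Delta\}$ is again a lattice polytope. The Newton polyhedron $\Delta(g)$ of a Laurent polynomial $g=\sum c_mx^m$ is the convex hull of the exponents $m$ with $c_m\neq0$. $g$ is convenient if $0$ lies in the interior of $\Delta(g)$; it is non-degenerate (Kouchnirenko) if for every face $\sigma$ of $\Delta(g)$ not containing $0$, the polynomial $g_\sigma=\sum_{m\in\sigma}c_mx^m$ has no critical point on $(\mathbb{C}^* )^n$. *)

theory Defs
  imports "HOL-Analysis.Analysis"
begin

text \<open>Lattice M = Z^n inside R (x) M = real^'n; the dual lattice N is identified with
  Z^n inside real^'n via the standard inner product.\<close>

definition lattice_point :: "real^'n \<Rightarrow> bool" where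
  "lattice_point m \<longleftrightarrow> (\<forall>i. m $ i \<in> \<int>)"

definition lattice_polytope :: "(real^'n) set \<Rightarrow> bool" where
  "lattice_polytope P \<longleftrightarrow>
     (\<exists>S. finite S \<and> S \<noteq> {} \<and> (\<forall>m\<in>S. lattice_point m) \<and> P = convex hull S)"

definition polar_dual :: "(real^'n) set \<Rightarrow> (real^'n) set" where
  "polar_dual P = {u. \<forall>m\<in>P. inner u m \<ge> -1}"

definition reflexive_polytope :: "(real^'n) set \<Rightarrow> bool" where
  "reflexive_polytope P \<longleftrightarrow>
     lattice_polytope P \<and> 0 \<in> interior P \<and> lattice_polytope (polar_dual P)"

definition simplicial_polytope :: "(real^'n) set \<Rightarrow> bool" where
  "simplicial_polytope P \<longleftrightarrow>
     (\<forall>F. F facet_of P \<longrightarrow> (int CARD('n) - 1) simplex F)"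

definition polytope_vertices :: "(real^'n) set \<Rightarrow> (real^'n) set" where
  "polytope_vertices P = {v. v extreme_point_of P}"

definition lattice_basis :: "(real^'n) set \<Rightarrow> bool" where
  "lattice_basis B \<longleftrightarrow> finite B \<and> (\<forall>b\<in>B. lattice_point b) \<and> independent B \<and>
     (\<forall>m. lattice_point m \<longrightarrow>
        (\<exists>c. (\<forall>b\<in>B. c b \<in> \<int>) \<and> m = (\<Sum>b\<in>B. c b *\<^sub>R b)))"

text \<open>Laurent polynomials in x = (x_1..x_n) over C, given by a coefficient function on
  exponents m in Z^n (viewed in real^'n); x^m = prod_i x_i^(m_i).\<close>

definition monomial :: "complex^'n \<Rightarrow> real^'n \<Rightarrow> complex" where
  "monomial x m = (\<Prod>i\<in>UNIV. (x $ i) powi \<lfloor>m $ i\<rfloor>)"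

definition support :: "(real^'n \<Rightarrow> complex) \<Rightarrow> (real^'n) set" where
  "support c = {m. c m \<noteq> 0}"

definition laurent_eval :: "(real^'n \<Rightarrow> complex) \<Rightarrow> complex^'n \<Rightarrow> complex" where
  "laurent_eval c x = (\<Sum>m\<in>support c. c m * monomial x m)"

definition newton_polyhedron :: "(real^'n \<Rightarrow> complex) \<Rightarrow> (real^'n) set" where
  "newton_polyhedron c = convex hull (support c)"

definition convenient :: "(real^'n \<Rightarrow> complex) \<Rightarrow> bool" where
  "convenient c \<longleftrightarrow> 0 \<in> interior (newton_polyhedron c)"

definition restrict_coeffs :: "(real^'n \<Rightarrow> complex) \<Rightarrow> (real^'n) set \<Rightarrow> (real^'n \<Rightarrow> complex)" where
  "restrict_coeffs c \<sigma> = (\<lambda>m. if m \<in> \<sigma> then c m else 0)"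

definition torus_critical_point :: "(complex^'n \<Rightarrow> complex) \<Rightarrow> complex^'n \<Rightarrow> bool" where
  "torus_critical_point g x \<longleftrightarrow> (\<forall>i. x $ i \<noteq> 0) \<and>
     (\<forall>i. ((\<lambda>t. g (\<chi> j. if j = i then t else x $ j)) has_field_derivative 0) (at (x $ i)))"

definition kouchnirenko_nondegenerate :: "(real^'n \<Rightarrow> complex) \<Rightarrow> bool" where
  "kouchnirenko_nondegenerate c \<longleftrightarrow>
     (\<forall>\<sigma>. \<sigma> face_of newton_polyhedron c \<and> \<sigma> \<noteq> {} \<and> 0 \<notin> \<sigma> \<longrightarrow>
        \<not> (\<exists>x. torus_critical_point (laurent_eval (restrict_coeffs c \<sigma>)) x))"

end

theory Submission imports Defs begin

lemma monomial_deriv: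
  fixes x :: "complex^'n" and m :: "real^'n"
  assumes "\<forall>j. x $ j \<noteq> 0"
  shows "((\<lambda>t. monomial (\<chi> j. if j = i then t else x $ j) m) has_field_derivative
          (of_int \<lfloor>m $ i\<rfloor> * monomial x m / x $ i)) (at (x $ i))"
proof -
  define P where "P = (\<Prod>j\<in>UNIV-{i}. (x $ j) powi \<lfloor>m $ j\<rfloor>)"
  define k where "k = \<lfloor>m $ i\<rfloor>"
  have eq: "monomial (\<chi> j. if j = i then t else x $ j) m = P * t powi k" for t
  proof -
    have "monomial (\<chi> j. if j = i then t else x $ j) m
       = t powi k * (\<Prod>j\<in>UNIV-{i}. ((\<chi> j. if j = i then t else x $ j) $ j) powi \<lfloor>m $ j\<rfloor>)"
      unfolding monomial_def k_def using prod.remove[of UNIV i "\<lambda>j. ((\<chi> j. if j = i then t else x $ j) $ j) powi \<lfloor>m $ j\<rfloor>"] by simp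
    also have "(\<Prod>j\<in>UNIV-{i}. ((\<chi> j. if j = i then t else x $ j) $ j) powi \<lfloor>m $ j\<rfloor>) = P"
      unfolding P_def by (intro prod.cong) auto
    finally show ?thesis by simp
  qed
  have mx: "monomial x m = P * (x $ i) powi k"
    unfolding monomial_def P_def k_def by (simp add: prod.remove mult.commute)
  have d: "((\<lambda>t. P * t powi k) has_field_derivative (P * (of_int k * (x $ i) powi (k - 1) * 1))) (at (x $ i))"
    by (intro DERIV_cmult DERIV_power_int DERIV_ident) (use assms in auto)
  have "P * (of_int k * (x $ i) powi (k - 1) * 1) = of_int k * monomial x m / x $ i"
    using assms by (simp add: mx power_int_diff)
  with d eq show ?thesis by (simp add: k_def)
qed

lemma no_crit:
  fixes d :: "real^'n \<Rightarrow> complex"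
  assumes fin: "finite (support d)" and ind: "independent (support d)"
    and ne: "support d \<noteq> {}" and lat: "\<forall>m\<in>support d. lattice_point m"
  shows "\<not> torus_critical_point (laurent_eval d) x"
proof
  assume tc: "torus_critical_point (laurent_eval d) x"
  let ?W = "support d"
  have nz: "\<forall>j. x $ j \<noteq> 0" using tc unfolding torus_critical_point_def by auto
  define z where "z m = d m * monomial x m" for m
  have key: "(\<Sum>m\<in>?W. z m * of_real (m $ i)) = 0" for i
  proof -
    have D: "((\<lambda>t. laurent_eval d (\<chi> j. if j = i then t else x $ j)) has_field_derivative
          (\<Sum>m\<in>?W. d m * (of_int \<lfloor>m $ i\<rfloor> * monomial x m / x $ i))) (at (x $ i))"
      unfolding laurent_eval_def
      by (intro DERIV_sum DERIV_cmult monomial_deriv nz)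
    have D0: "((\<lambda>t. laurent_eval d (\<chi> j. if j = i then t else x $ j)) has_field_derivative 0) (at (x $ i))"
      using tc unfolding torus_critical_point_def by auto
    have "(\<Sum>m\<in>?W. d m * (of_int \<lfloor>m $ i\<rfloor> * monomial x m / x $ i)) = 0"
      using DERIV_unique[OF D D0] .
    also have "(\<Sum>m\<in>?W. d m * (of_int \<lfloor>m $ i\<rfloor> * monomial x m / x $ i))
        = (\<Sum>m\<in>?W. z m * of_int \<lfloor>m $ i\<rfloor>) / x $ i"
      unfolding sum_divide_distrib z_def by (simp add: algebra_simps)
    finally have "(\<Sum>m\<in>?W. z m * of_int \<lfloor>m $ i\<rfloor>) = 0"
      using nz by simp
    moreover have "of_int \<lfloor>m $ i\<rfloor> = (of_real (m $ i) :: complex)" if "m \<in> ?W" for m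
    proof -
      from lat that have "m $ i \<in> \<int>" unfolding lattice_point_def by auto
      then show ?thesis by (metis Ints_cases floor_of_int of_real_of_int_eq)
    qed
    ultimately show ?thesis by (metis (no_types, lifting) sum.cong)
  qed
  have re: "(\<Sum>m\<in>?W. Re (z m) *\<^sub>R m) = 0"
  proof (rule vec_eq_iff[THEN iffD2], rule allI)
    fix i
    have "Re (\<Sum>m\<in>?W. z m * of_real (m $ i)) = 0" by (simp add: key)
    then show "(\<Sum>m\<in>?W. Re (z m) *\<^sub>R m) $ i = 0 $ i"
      by (simp add: Re_sum mult.commute)
  qed
  have im: "(\<Sum>m\<in>?W. Im (z m) *\<^sub>R m) = 0"
  proof (rule vec_eq_iff[THEN iffD2], rule allI)
    fix i
    have "Im (\<Sum>m\<in>?W. z m * of_real (m $ i)) = 0" by (simp add: key)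
    then show "(\<Sum>m\<in>?W. Im (z m) *\<^sub>R m) $ i = 0 $ i"
      by (simp add: Im_sum mult.commute)
  qed
  obtain m where m: "m \<in> ?W" using ne by auto
  have "Re (z m) = 0" using ind re m unfolding independent_explicit by auto
  moreover have "Im (z m) = 0" using ind im m unfolding independent_explicit by auto
  ultimately have "z m = 0" by (simp add: complex_eq_iff)
  moreover have "monomial x m \<noteq> 0" using nz unfolding monomial_def by simp
  moreover have "d m \<noteq> 0" using m unfolding support_def by simp
  ultimately show False unfolding z_def by simp
qed
theorem lemma3p3:
  fixes \<Delta> :: "(real^'n) set" and a :: "real^'n \<Rightarrow> complex"
  assumes "reflexive_polytope \<Delta>"
    and "simplicial_polytope \<Delta>"
    and "\<forall>F. F facet_of polar_dual \<Delta> \<longrightarrow> lattice_basis (polytope_vertices F)"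
    and "\<forall>v\<in>polytope_vertices (polar_dual \<Delta>). a v \<noteq> 0"
  shows "convenient (\<lambda>m. if m \<in> polytope_vertices (polar_dual \<Delta>) then a m else 0) \<and>
         kouchnirenko_nondegenerate (\<lambda>m. if m \<in> polytope_vertices (polar_dual \<Delta>) then a m else 0)"
proof -
  define P where "P = polar_dual \<Delta>"
  define V where "V = polytope_vertices P"
  define c where "c = (\<lambda>m. if m \<in> V then a m else 0)"
  obtain S where S: "finite S" "\<forall>m\<in>S. lattice_point m" "P = convex hull S"
    using assms(1) unfolding reflexive_polytope_def lattice_polytope_def P_def by blast
  obtain S' where S': "finite S'" "\<Delta> = convex hull S'"
    using assms(1) unfolding reflexive_polytope_def lattice_polytope_def by blast
  have VS: "V \<subseteq> S" unfolding V_def polytope_vertices_def using S(3)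
    by (auto intro: extreme_point_of_convex_hull)
  have finV: "finite V" using VS S(1) finite_subset by blast
  have cP: "compact P" "convex P" using S by (auto simp: finite_imp_compact_convex_hull)
  have PV: "P = convex hull V"
    unfolding V_def polytope_vertices_def using Krein_Milman_Minkowski[OF cP] by simp
  have suppc: "support c = V" using assms(4) unfolding support_def c_def V_def P_def by auto
  have NP: "newton_polyhedron c = P" unfolding newton_polyhedron_def suppc PV ..
  have int0: "0 \<in> interior P"
  proof -
    have "bounded \<Delta>" using S' by (simp add: finite_imp_bounded_convex_hull)
    then obtain R where R: "R > 0" "\<forall>m\<in>\<Delta>. norm m \<le> R" using bounded_pos by blast
    have "ball 0 (1/R) \<subseteq> P"
    proof
      fix u :: "real^'n" assume "u \<in> ball 0 (1/R)"
      then have nu: "norm u < 1/R" by simp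
      show "u \<in> P" unfolding P_def polar_dual_def
      proof (clarify)
        fix m assume m: "m \<in> \<Delta>"
        have "\<bar>inner u m\<bar> \<le> norm u * norm m" by (rule Cauchy_Schwarz_ineq2)
        also have "\<dots> \<le> (1/R) * R"
          using nu R m by (intro mult_mono) auto
        also have "\<dots> = 1" using R by simp
        finally show "inner u m \<ge> -1" by simp
      qed
    qed
    then show ?thesis using R by (meson interior_maximal open_ball centre_in_ball subsetD divide_pos_pos zero_less_one)
  qed
  have conv: "convenient c" unfolding convenient_def NP by (rule int0)
  have nd: "kouchnirenko_nondegenerate c"
    unfolding kouchnirenko_nondegenerate_def NP
  proof (intro allI impI notI)
    fix \<sigma> assume h: "\<sigma> face_of P \<and> \<sigma> \<noteq> {} \<and> 0 \<notin> \<sigma>"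
    assume "\<exists>x. torus_critical_point (laurent_eval (restrict_coeffs c \<sigma>)) x"
    then obtain x where x: "torus_critical_point (laurent_eval (restrict_coeffs c \<sigma>)) x" by blast
    have "0 \<in> P" using int0 interior_subset by blast
    then have neP: "\<sigma> \<noteq> P" using h by blast
    have "polyhedron P" using S by (intro polytope_imp_polyhedron) (auto simp: polytope_def)
    then obtain F where F: "F facet_of P" "\<sigma> \<subseteq> F"
      using face_of_polyhedron_subset_facet h neP by blast
    have indF: "independent (polytope_vertices F)"
      using assms(3) F(1) unfolding P_def lattice_basis_def by blast
    have supp: "support (restrict_coeffs c \<sigma>) = V \<inter> \<sigma>"
      using suppc unfolding support_def restrict_coeffs_def by auto
    have sub: "V \<inter> \<sigma> \<subseteq> polytope_vertices F"
    proof
      fix v assume v: "v \<in> V \<inter> \<sigma>"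
      have "F face_of P" using F(1) facet_of_imp_face_of by blast
      then show "v \<in> polytope_vertices F"
        using v F(2) extreme_point_of_face unfolding V_def polytope_vertices_def by blast
    qed
    have ne: "V \<inter> \<sigma> \<noteq> {}"
    proof -
      have "compact \<sigma>" "convex \<sigma>" using h cP face_of_imp_compact face_of_imp_convex by blast+
      then obtain v where "v extreme_point_of \<sigma>" using extreme_point_exists_convex h by blast
      then have "v extreme_point_of P \<and> v \<in> \<sigma>" using extreme_point_of_face h by blast
      then show ?thesis unfolding V_def polytope_vertices_def by blast
    qed
    have "\<not> torus_critical_point (laurent_eval (restrict_coeffs c \<sigma>)) x"
      using no_crit[of "restrict_coeffs c \<sigma>" x] supp finV independent_mono[OF indF sub] ne VS S(2) by auto
    with x show False by blast
  qed
  show ?thesis using conv nd unfolding c_def V_def P_def by blast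
qed

end
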